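(* Let $e\ge 2$ be fixed. For $n\ge 2$ let $c_{n,2e}=-\min_{x\in[-1,1]}Q_{n,2e}(x)$ and $b_{n,2e}=1+Q_{n,2e}(1)/c_{n,2e}$. Then there exist positive constants $A_{2e}$ and $B_{2e}$, depending only on $e$, such that \[\lim_{n\to\infty}\frac{c_{n,2e}}{n^e}=A_{2e}\quad\text{and}\quad\lim_{n\to\infty}\frac{b_{n,2e}}{n^e}=B_{2e}.\] Consequently $c_{n,2e}=A_{2e}n^e(1+o(1))$ and $b_{n,2e}=B_{2e}n^e(1+o(1))$ as $n\to\infty$.
   Context: $Q_{n,k}(x)$ denotes the Gegenbauer polynomial of degree $k$ associated with $\mathbb{S}^{n-1}\subseteq\mathbb{R}^n$: the $Q_{n,k}$ are orthogonal on $[-1,1]$ with respect to the weight $(1-x^2)^{(n-3)/2}$ and normalized so that $Q_{n,k}(1)=\binom{n+k-1}{n-1}-\binom{n+k-3}{n-1}$, the dimension of the space of real homogeneous harmonic polynomials of degree $k$ in $n$ variables. *)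

theory Defs
  imports "HOL-Analysis.Analysis" "HOL-Computational_Algebra.Polynomial"
begin

text \<open>Dimension of the space of real homogeneous harmonic polynomials of degree k in n variables.\<close>
definition harm_dim :: "nat \<Rightarrow> nat \<Rightarrow> real" where
  "harm_dim n k = real ((n + k - 1) choose (n - 1)) - real ((n + k - 3) choose (n - 1))"

text \<open>Gegenbauer weight on [-1,1] for the sphere S^(n-1) in R^n.\<close>
definition geg_weight :: "nat \<Rightarrow> real \<Rightarrow> real" where
  "geg_weight n x = (1 - x\<^sup>2) powr ((real n - 3) / 2)"

definition Geg :: "nat \<Rightarrow> nat \<Rightarrow> real poly" where
  "Geg n k = (THE p. degree p = k \<and>
      (\<forall>q :: real poly. degree q < k \<longrightarrow>
         (LINT x:{-1..1}|lborel. geg_weight n x * poly p x * poly q x) = 0) \<and>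
      poly p 1 = harm_dim n k)"

definition geg_c :: "nat \<Rightarrow> nat \<Rightarrow> real" where
  "geg_c n k = - (INF x\<in>{-1..1::real}. poly (Geg n k) x)"

definition geg_b :: "nat \<Rightarrow> nat \<Rightarrow> real" where
  "geg_b n k = 1 + poly (Geg n k) 1 / geg_c n k"

end

theory Submission
  imports Defs "HOL-Probability.Probability"
begin


lemma gw_pos: "-1 < x \<Longrightarrow> x < 1 \<Longrightarrow> geg_weight n x > 0"
proof -
  assume "-1 < x" "x < 1"
  hence "x\<^sup>2 < 1" by (simp add: abs_square_less_1 abs_less_iff)
  thus ?thesis unfolding geg_weight_def by simp
qed

lemma gw_cont: assumes "n \<ge> 4" shows "continuous_on {-1..1} (geg_weight n)"
  unfolding geg_weight_def
proof (rule continuous_on_powr')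
  show "continuous_on {-1..1} (\<lambda>x::real. 1 - x\<^sup>2)" by (intro continuous_intros)
  show "continuous_on {-1..1} (\<lambda>x::real. (real n - 3) / 2)" by (intro continuous_intros)
  show "\<forall>x\<in>{-1..1::real}. 0 \<le> 1 - x\<^sup>2 \<and> (1 - x\<^sup>2 = 0 \<longrightarrow> 0 < (real n - 3) / 2)"
    using assms by (auto simp: abs_square_le_1)
qed

definition mom :: "nat \<Rightarrow> nat \<Rightarrow> real" where
  "mom n m = integral {-1..1} (\<lambda>x. geg_weight n x * x ^ m)"

lemma gwx_cont: "n \<ge> 4 \<Longrightarrow> continuous_on {-1..1} (\<lambda>x. geg_weight n x * x ^ m)"
  by (intro continuous_intros gw_cont)

lemma mom_has: "n \<ge> 4 \<Longrightarrow> ((\<lambda>x. geg_weight n x * x ^ m) has_integral mom n m) {-1..1}"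
  unfolding mom_def by (intro integrable_integral integrable_continuous_interval gwx_cont)

lemma mom_rec:
  assumes n: "n \<ge> 4"
  shows "real j * mom n (j - 1) = (real j + real n - 1) * mom n (j + 1)"
proof -
  define a where "a = (real n - 3) / 2"
  have a: "a > 0" using n by (simp add: a_def)
  define F where "F x = x ^ j * (1 - x\<^sup>2) powr (a + 1)" for x :: real
  define F' where "F' x = real j * (geg_weight n x * x ^ (j - 1)) - (real j + real n - 1) * (geg_weight n x * x ^ (j + 1))" for x :: real
  have deriv: "(F has_vector_derivative F' x) (at x)" if x: "x \<in> {-1<..<1}" for x
  proof -
    have b: "1 - x\<^sup>2 > 0" using x by (simp add: abs_square_less_1 abs_less_iff)
    have "(F has_real_derivative (real j * x ^ (j - 1) * (1 - x\<^sup>2) powr (a + 1) +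
             x ^ j * ((a + 1) * (1 - x\<^sup>2) powr a * (- 2 * x)))) (at x)"
      unfolding F_def using b
      by (auto intro!: derivative_eq_intros simp: powr_diff)
    moreover have "real j * x ^ (j - 1) * (1 - x\<^sup>2) powr (a + 1) +
             x ^ j * ((a + 1) * (1 - x\<^sup>2) powr a * (- 2 * x)) = F' x"
    proof -
      have p: "(1 - x\<^sup>2) powr (a + 1) = (1 - x\<^sup>2) * (1 - x\<^sup>2) powr a"
        using b by (simp add: powr_add)
      have gw: "geg_weight n x = (1 - x\<^sup>2) powr a" by (simp add: geg_weight_def a_def)
      have q: "real j * x ^ (j - 1) * x\<^sup>2 = real j * x ^ (j + 1)"
        by (cases j) (auto simp: power2_eq_square)
      have "real j * x ^ (j - 1) * (1 - x\<^sup>2) powr (a + 1) +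
             x ^ j * ((a + 1) * (1 - x\<^sup>2) powr a * (- 2 * x))
           = (1 - x\<^sup>2) powr a * (real j * x ^ (j - 1) - real j * x ^ (j - 1) * x\<^sup>2 - 2 * (a + 1) * x ^ (j + 1))"
        unfolding p by (simp add: algebra_simps)
      also have "\<dots> = (1 - x\<^sup>2) powr a * (real j * x ^ (j - 1) - (real j + 2 * a + 2) * x ^ (j + 1))"
        unfolding q by (simp add: algebra_simps)
      also have "\<dots> = F' x"
      proof -
        have e: "real j + 2 * a + 2 = real j + real n - 1" by (simp add: a_def field_simps)
        show ?thesis unfolding F'_def gw e by (simp add: algebra_simps)
      qed
      finally show ?thesis .
    qed
    ultimately show ?thesis by (simp add: has_real_derivative_iff_has_vector_derivative)
  qed
  have cont: "continuous_on {-1..1} F"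
    unfolding F_def
    by (intro continuous_intros continuous_on_powr') (use a in \<open>auto simp: abs_square_le_1\<close>)
  have "(F' has_integral (F 1 - F (-1))) {-1..1}"
    by (rule fundamental_theorem_of_calculus_interior) (use deriv cont in auto)
  hence I0: "(F' has_integral 0) {-1..1}" by (simp add: F_def)
  have I1: "(F' has_integral (real j * mom n (j - 1) - (real j + real n - 1) * mom n (j + 1))) {-1..1}"
    unfolding F'_def by (intro has_integral_diff has_integral_mult_right mom_has n)
  from has_integral_unique[OF I0 I1] show ?thesis by simp
qed



lemma mom_odd: assumes n: "n \<ge> 4" shows "mom n (2 * r + 1) = 0"
proof (induction r)
  case 0
  have "real 0 * mom n (0 - 1) = (real 0 + real n - 1) * mom n (0 + 1)" by (rule mom_rec[OF n])
  thus ?case using n by simp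
next
  case (Suc r)
  have "real (2*r+2) * mom n (2*r+2 - 1) = (real (2*r+2) + real n - 1) * mom n (2*r+2 + 1)" by (rule mom_rec[OF n])
  moreover have "2*r+2-1 = 2*r+1" by simp
  ultimately have "(real (2*r+2) + real n - 1) * mom n (2*r+3) = 0" using Suc by (simp add: numeral_3_eq_3)
  moreover have "real (2*r+2) + real n - 1 \<noteq> 0" using n by simp
  ultimately show ?case by (simp add: numeral_3_eq_3)
qed

definition mu :: "nat \<Rightarrow> nat \<Rightarrow> real" where
  "mu n m = pochhammer (1/2) m / pochhammer (real n / 2) m"

lemma mom_even: assumes n: "n \<ge> 4" shows "mom n (2 * r) = mom n 0 * mu n r"
proof (induction r)
  case 0
  then show ?case by (simp add: mu_def)
next
  case (Suc r)
  have "real (2*r+1) * mom n (2*r+1 - 1) = (real (2*r+1) + real n - 1) * mom n (2*r+1 + 1)" by (rule mom_rec[OF n])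
  hence e: "real (2*r+1) * mom n (2*r) = (real (2*r) + real n) * mom n (2*(Suc r))" by simp
  have pos: "real (2*r) + real n > 0" using n by simp
  have "mom n (2*(Suc r)) = real (2*r+1) / (real (2*r) + real n) * mom n (2*r)"
    using e pos by (simp add: field_simps)
  also have "\<dots> = mom n 0 * mu n (Suc r)"
  proof -
    have "pochhammer (real n / 2) r > 0" using n by (intro pochhammer_pos) simp
    hence "mu n (Suc r) = mu n r * ((1/2 + real r) / (real n / 2 + real r))"
      unfolding mu_def pochhammer_Suc by simp
    also have "(1/2 + real r) / (real n / 2 + real r) = real (2*r+1) / (real (2*r) + real n)"
      using pos by (simp add: field_simps)
    finally show ?thesis using Suc by simp

  qed
  finally show ?case .
qed

lemma fd_step:
  fixes f :: "nat \<Rightarrow> real"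
  shows "(\<Sum>j\<le>Suc e. (-1)^j * real (Suc e choose j) * f j) =
         (\<Sum>j\<le>e. (-1)^j * real (e choose j) * (f j - f (Suc j)))"
proof -
  have L: "(\<Sum>j\<le>Suc e. (-1)^j * real (Suc e choose j) * f j) =
        f 0 + (\<Sum>j\<le>e. (-1)^(Suc j) * real (Suc e choose Suc j) * f (Suc j))"
    by (subst sum.atMost_Suc_shift) simp
  have S: "(\<Sum>j\<le>e. (-1)^(Suc j) * real (Suc e choose Suc j) * f (Suc j)) =
        (\<Sum>j\<le>e. (-1)^(Suc j) * real (e choose j) * f (Suc j)) +
        (\<Sum>j\<le>e. (-1)^(Suc j) * real (e choose Suc j) * f (Suc j))"
    by (simp add: sum.distrib[symmetric] algebra_simps)
  have T: "f 0 + (\<Sum>j\<le>e. (-1)^(Suc j) * real (e choose Suc j) * f (Suc j)) =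
        (\<Sum>j\<le>e. (-1)^j * real (e choose j) * f j)"
  proof -
    have "(\<Sum>j\<le>e. (-1)^j * real (e choose j) * f j) = (\<Sum>j\<le>Suc e. (-1)^j * real (e choose j) * f j)"
      by simp
    also have "\<dots> = f 0 + (\<Sum>j\<le>e. (-1)^(Suc j) * real (e choose Suc j) * f (Suc j))"
      by (subst sum.atMost_Suc_shift) simp
    finally show ?thesis by simp
  qed
  show ?thesis unfolding L S using T
    by (simp add: sum_subtractf sum_negf algebra_simps)
qed

lemma degree_diff_shift:
  fixes p :: "real poly"
  assumes "degree p > 0"
  shows "degree (p - p \<circ>\<^sub>p [:1, 1:]) < degree p"
proof -
  let ?q = "p \<circ>\<^sub>p [:1, 1:]"
  have dq: "degree ?q = degree p" by (simp add: degree_pcompose)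
  have lq: "lead_coeff ?q = lead_coeff p" by (subst lead_coeff_comp) auto
  have le: "degree (p - ?q) \<le> degree p" using degree_diff_le[of p "degree p" ?q] dq by simp
  have c: "coeff (p - ?q) (degree p) = 0" using lq dq by simp
  show ?thesis
  proof (rule ccontr)
    assume neg: "\<not> degree (p - ?q) < degree p"
    hence "degree (p - ?q) = degree p" using le by simp
    moreover have "p - ?q \<noteq> 0" using assms neg by auto
    ultimately show False using c by (metis leading_coeff_0_iff)
  qed
qed

lemma fd:
  fixes p :: "real poly"
  shows "degree p < e \<Longrightarrow> (\<Sum>j\<le>e. (-1)^j * real (e choose j) * poly p (real j)) = 0"
proof (induction e arbitrary: p)
  case 0 then show ?case by simp
next
  case (Suc e)
  let ?d = "p - p \<circ>\<^sub>p [:1, 1:]"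
  have pd: "poly p (real j) - poly p (real (Suc j)) = poly ?d (real j)" for j
    by (simp add: poly_pcompose add.commute)
  have "(\<Sum>j\<le>Suc e. (-1)^j * real (Suc e choose j) * poly p (real j)) =
        (\<Sum>j\<le>e. (-1)^j * real (e choose j) * poly ?d (real j))"
    by (subst fd_step, simp only: pd)
  also have "\<dots> = 0"
  proof (cases "degree p = 0")
    case True
    then obtain c where "p = [:c:]" by (metis degree_eq_zeroE)
    then show ?thesis by simp
  next
    case False
    then have "degree ?d < degree p" by (intro degree_diff_shift) simp
    with Suc.prems have "degree ?d < e" by simp
    then show ?thesis by (rule Suc.IH)
  qed
  finally show ?case .
qed



definition cc :: "nat \<Rightarrow> nat \<Rightarrow> nat \<Rightarrow> real" where
  "cc e n i = (-1)^i * real (e choose i) * pochhammer (real n / 2 + real e - 1) i / pochhammer (1/2) i"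

lemma poly_prod_lin: "poly (\<Prod>l<m. [:z + real l, 1:]) x = pochhammer (z + x) m"
  by (simp add: poly_prod pochhammer_prod atLeast0LessThan algebra_simps)

lemma ident:
  assumes n: "n \<ge> 1" and r: "r < e"
  shows "(\<Sum>i\<le>e. cc e n i * mu n (i + r)) = 0"
proof -
  define b where "b = real n / 2"
  have b: "b > 0" using n by (simp add: b_def)
  define Q where "Q = (\<Prod>l<r. [:1/2 + real l, 1:]) * (\<Prod>l<e-1-r. [:b + real r + real l, 1:])"
  have pQ: "poly Q x = pochhammer (1/2 + x) r * pochhammer (b + real r + x) (e-1-r)" for x
    unfolding Q_def poly_mult poly_prod_lin by simp
  have dQ: "degree Q < e"
  proof -
    have "degree Q \<le> degree (\<Prod>l<r. [:1/2 + real l, 1:]) + degree (\<Prod>l<e-1-r. [:b + real r + real l, 1:])"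
      unfolding Q_def by (rule degree_mult_le)
    also have "degree (\<Prod>l<r. [:1/2 + real l, 1:]) \<le> r"
      using degree_prod_sum_le[of "{..<r}" "\<lambda>l. [:1/2 + real l, 1:]"] by simp
    also have "degree (\<Prod>l<e-1-r. [:b + real r + real l, 1:]) \<le> e-1-r"
      using degree_prod_sum_le[of "{..<e-1-r}" "\<lambda>l. [:b + real r + real l, 1:]"] by simp
    finally show ?thesis using r by linarith
  qed
  have key: "cc e n i * mu n (i + r) = (-1)^i * real (e choose i) * poly Q (real i) / pochhammer b (e-1)" for i
  proof -
    have X1: "pochhammer b ((e-1) + i) = pochhammer b (e-1) * pochhammer (b + real (e-1)) i"
      by (rule pochhammer_product')
    have X2: "pochhammer b ((i+r) + (e-1-r)) = pochhammer b (i+r) * pochhammer (b + real (i+r)) (e-1-r)"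
      by (rule pochhammer_product')
    have ee: "(e-1) + i = (i+r) + (e-1-r)" using r by simp
    have X3: "pochhammer (1/2::real) (i + r) = pochhammer (1/2) i * pochhammer (1/2 + real i) r"
      by (rule pochhammer_product')
    have be: "b + real (e-1) = b + real e - 1" using r by (simp add: b_def of_nat_diff)
    have p1: "pochhammer b (e-1) > 0" "pochhammer b (i+r) > 0" using b by (auto intro!: pochhammer_pos)
    have p2: "pochhammer (1/2::real) i > 0" by (intro pochhammer_pos) simp
    have E: "pochhammer (b + real e - 1) i * pochhammer b (e-1)
            = pochhammer b (i+r) * pochhammer (b + real r + real i) (e-1-r)"
    proof -
      have "pochhammer (b + real e - 1) i * pochhammer b (e-1) = pochhammer b ((e-1) + i)"
        unfolding X1 be[symmetric] by simp
      also have "\<dots> = pochhammer b ((i+r) + (e-1-r))" unfolding ee ..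
      also have "\<dots> = pochhammer b (i+r) * pochhammer (b + real (i+r)) (e-1-r)" by (rule X2)
      also have "b + real (i+r) = b + real r + real i" by simp
      finally show ?thesis .
    qed
    show ?thesis
      unfolding cc_def mu_def pQ X3 b_def[symmetric] using p1 p2 E
      by (simp add: field_simps)
  qed
  have "(\<Sum>i\<le>e. cc e n i * mu n (i + r)) =
        (\<Sum>i\<le>e. (-1)^i * real (e choose i) * poly Q (real i)) / pochhammer b (e-1)"
    unfolding key by (simp add: sum_divide_distrib)
  also have "\<dots> = 0" using fd[OF dQ] by simp
  finally show ?thesis .
qed

definition P0 :: "nat \<Rightarrow> nat \<Rightarrow> real poly" where
  "P0 e n = (\<Sum>i\<le>e. monom (cc e n i) (2*i))"

lemma poly_P0: "poly (P0 e n) x = (\<Sum>i\<le>e. cc e n i * x^(2*i))"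
  by (simp add: P0_def poly_sum poly_monom)

lemma orth_mono:
  assumes n: "n \<ge> 4" and i: "i < 2*e"
  shows "integral {-1..1} (\<lambda>x. geg_weight n x * poly (P0 e n) x * x^i) = 0"
proof -
  have "integral {-1..1} (\<lambda>x. geg_weight n x * poly (P0 e n) x * x^i)
      = integral {-1..1} (\<lambda>x. \<Sum>j\<le>e. cc e n j * (geg_weight n x * x^(2*j+i)))"
    by (simp add: poly_P0 sum_distrib_left sum_distrib_right power_add algebra_simps)
  also have "\<dots> = (\<Sum>j\<le>e. integral {-1..1} (\<lambda>x. cc e n j * (geg_weight n x * x^(2*j+i))))"
    by (intro integral_sum) (auto intro!: integrable_continuous_interval continuous_intros gw_cont n)
  also have "\<dots> = (\<Sum>j\<le>e. cc e n j * mom n (2*j+i))"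
    by (simp add: mom_def)
  also have "\<dots> = 0"
  proof (cases "even i")
    case True
    then obtain r where ir: "i = 2*r" by auto
    have "(\<Sum>j\<le>e. cc e n j * mom n (2*j+i)) = mom n 0 * (\<Sum>j\<le>e. cc e n j * mu n (j + r))"
    proof -
      have m: "mom n (2*j+2*r) = mom n 0 * mu n (j+r)" for j
        using mom_even[OF n, of "j+r"] by (simp add: algebra_simps)
      show ?thesis unfolding ir m by (simp add: sum_distrib_left algebra_simps)
    qed
    also have "\<dots> = 0" using ident[of n r e] n i ir by simp
    finally show ?thesis .
  next
    case False
    then obtain r where ir: "i = 2*r+1" using oddE by blast
    have "mom n (2*j + i) = 0" for j using mom_odd[OF n, of "j+r"] ir by (simp add: algebra_simps)
    then show ?thesis by simp
  qed
  finally show ?thesis .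
qed

lemma orth_poly:
  assumes n: "n \<ge> 4" and q: "degree q < 2*e"
  shows "integral {-1..1} (\<lambda>x. geg_weight n x * poly (P0 e n) x * poly q x) = 0"
proof -
  have "integral {-1..1} (\<lambda>x. geg_weight n x * poly (P0 e n) x * poly q x)
      = integral {-1..1} (\<lambda>x. \<Sum>i\<le>degree q. coeff q i * (geg_weight n x * poly (P0 e n) x * x^i))"
  proof -
    have pq: "poly q x = (\<Sum>i\<le>degree q. coeff q i * x ^ i)" for x by (rule poly_altdef)
    show ?thesis by (simp add: pq sum_distrib_left algebra_simps)
  qed
  also have "\<dots> = (\<Sum>i\<le>degree q. integral {-1..1} (\<lambda>x. coeff q i * (geg_weight n x * poly (P0 e n) x * x^i)))"
    by (intro integral_sum) (auto intro!: integrable_continuous_interval continuous_intros gw_cont n)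
  also have "\<dots> = (\<Sum>i\<le>degree q. coeff q i * integral {-1..1} (\<lambda>x. geg_weight n x * poly (P0 e n) x * x^i))"
    by simp
  also have "\<dots> = 0" using orth_mono[OF n] q by simp
  finally show ?thesis .
qed

lemma lint_eq:
  assumes n: "n \<ge> 4"
  shows "(LINT x:{-1..1}|lborel. geg_weight n x * poly p x * poly q x) =
         integral {-1..1} (\<lambda>x. geg_weight n x * poly p x * poly q x)"
  by (intro set_borel_integral_eq_integral(2) borel_integrable_atLeastAtMost')
     (auto intro!: continuous_intros gw_cont n)



definition geg_spec :: "nat \<Rightarrow> nat \<Rightarrow> real poly \<Rightarrow> bool" where
  "geg_spec n k p \<longleftrightarrow> degree p = k \<and>
      (\<forall>q :: real poly. degree q < k \<longrightarrow>
         (LINT x:{-1..1}|lborel. geg_weight n x * poly p x * poly q x) = 0) \<and>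
      poly p 1 = harm_dim n k"

lemma Geg_spec_def: "Geg n k = (THE p. geg_spec n k p)"
  unfolding Geg_def geg_spec_def ..

lemma degree_lt_aux:
  fixes r :: "real poly"
  assumes "degree r \<le> k" "coeff r k = 0" "k > 0"
  shows "degree r < k"
proof (rule ccontr)
  assume neg: "\<not> degree r < k"
  hence "degree r = k" using assms by simp
  moreover have "r \<noteq> 0" using assms neg by auto
  ultimately show False using assms by (metis leading_coeff_0_iff)
qed

lemma uniq:
  assumes n: "n \<ge> 4" and h: "harm_dim n k \<noteq> 0"
    and s1: "geg_spec n k p1" and s2: "geg_spec n k p2"
  shows "p1 = p2"
proof (cases "k = 0")
  case True
  from s1 True have "degree p1 = 0" "poly p1 1 = harm_dim n k" by (auto simp: geg_spec_def)
  moreover from s2 True have "degree p2 = 0" "poly p2 1 = harm_dim n k" by (auto simp: geg_spec_def)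
  ultimately show ?thesis
  proof -
    assume a: "degree p1 = 0" "poly p1 1 = harm_dim n k" "degree p2 = 0" "poly p2 1 = harm_dim n k"
    obtain c1 where "p1 = [:c1:]" using a(1) by (metis degree_eq_zeroE)
    moreover obtain c2 where "p2 = [:c2:]" using a(3) by (metis degree_eq_zeroE)
    ultimately show ?thesis using a by simp
  qed
next
  case False
  let ?h = "harm_dim n k"
  have d1: "degree p1 = k" and o1: "\<And>q. degree q < k \<Longrightarrow> (LINT x:{-1..1}|lborel. geg_weight n x * poly p1 x * poly q x) = 0"
    and v1: "poly p1 1 = ?h" using s1 by (auto simp: geg_spec_def)
  have d2: "degree p2 = k" and o2: "\<And>q. degree q < k \<Longrightarrow> (LINT x:{-1..1}|lborel. geg_weight n x * poly p2 x * poly q x) = 0"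
    and v2: "poly p2 1 = ?h" using s2 by (auto simp: geg_spec_def)
  have "p1 \<noteq> 0" "p2 \<noteq> 0" using v1 v2 h by auto
  hence l1: "lead_coeff p1 \<noteq> 0" and l2: "lead_coeff p2 \<noteq> 0" by auto
  define r where "r = smult (lead_coeff p2) p1 - smult (lead_coeff p1) p2"
  have "degree r \<le> k" unfolding r_def using d1 d2
    by (intro degree_diff_le) (auto intro: order.trans[OF degree_smult_le])
  moreover have "coeff r k = 0" unfolding r_def using d1 d2 by simp
  ultimately have dr: "degree r < k" using False by (intro degree_lt_aux) auto
  have I1: "integral {-1..1} (\<lambda>x. geg_weight n x * poly p1 x * poly r x) = 0"
    using o1[OF dr] lint_eq[OF n] by simp
  have I2: "integral {-1..1} (\<lambda>x. geg_weight n x * poly p2 x * poly r x) = 0"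
    using o2[OF dr] lint_eq[OF n] by simp
  have int: "(\<lambda>x. geg_weight n x * poly p x * poly r x) integrable_on {-1..1}" for p
    by (intro integrable_continuous_interval) (auto intro!: continuous_intros gw_cont n)
  have "integral {-1..1} (\<lambda>x. geg_weight n x * poly r x * poly r x)
      = integral {-1..1} (\<lambda>x. lead_coeff p2 * (geg_weight n x * poly p1 x * poly r x) -
                                lead_coeff p1 * (geg_weight n x * poly p2 x * poly r x))"
    unfolding r_def by (simp add: algebra_simps)
  also have "\<dots> = 0"
  proof -
    have "integral {-1..1} (\<lambda>x. lead_coeff p2 * (geg_weight n x * poly p1 x * poly r x) -
                                lead_coeff p1 * (geg_weight n x * poly p2 x * poly r x))
       = integral {-1..1} (\<lambda>x. lead_coeff p2 * (geg_weight n x * poly p1 x * poly r x)) -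
         integral {-1..1} (\<lambda>x. lead_coeff p1 * (geg_weight n x * poly p2 x * poly r x))"
      using integrable_on_cmult_left[OF int, where c="lead_coeff p2"] integrable_on_cmult_left[OF int, where c="lead_coeff p1"] by (intro integral_diff) auto
    thus ?thesis using I1 I2 by simp
  qed
  finally have I0: "integral {-1..1} (\<lambda>x. geg_weight n x * poly r x * poly r x) = 0" .
  have z: "poly r x = 0" if x: "x \<in> {-1<..<1}" for x
  proof -
    have "geg_weight n x * poly r x * poly r x = 0"
    proof (rule has_integral_0_cbox_imp_0[where f="\<lambda>x. geg_weight n x * poly r x * poly r x" and a="-1" and b=1])
      show "continuous_on (cbox (-1) 1) (\<lambda>x. geg_weight n x * poly r x * poly r x)"
        by (auto simp: cbox_interval intro!: continuous_intros gw_cont n)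
      show "0 \<le> geg_weight n y * poly r y * poly r y" if "y \<in> box (-1) 1" for y
        using that gw_pos[of y n] by (simp add: box_real mult.assoc)
      show "((\<lambda>x. geg_weight n x * poly r x * poly r x) has_integral 0) (cbox (-1) 1)"
        using I0 int[of r] by (metis cbox_interval has_integral_integral)
      show "box (-1) (1::real) \<noteq> {}" by (simp add: box_real)
      show "x \<in> cbox (-1) 1" using x by (simp add: cbox_interval)
    qed
    moreover have "geg_weight n x > 0" using x gw_pos by auto
    ultimately show ?thesis by simp
  qed
  have r0: "r = 0"
  proof (rule ccontr)
    assume "r \<noteq> 0"
    hence "finite {x. poly r x = 0}" by (rule poly_roots_finite)
    moreover have "{-1<..<1::real} \<subseteq> {x. poly r x = 0}" using z by auto
    ultimately have "finite {-1<..<1::real}" by (rule finite_subset[rotated])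
    thus False using infinite_Ioo[of "-1::real" 1] by simp
  qed
  hence sm: "smult (lead_coeff p2) p1 = smult (lead_coeff p1) p2" unfolding r_def by simp
  hence "lead_coeff p2 * ?h = lead_coeff p1 * ?h"
    using v1 v2 by (metis poly_smult)
  hence "lead_coeff p2 = lead_coeff p1" using h by simp
  thus ?thesis using sm l1 by (metis smult_cancel)
qed

definition Pn :: "nat \<Rightarrow> nat \<Rightarrow> real poly" where
  "Pn e n = smult (harm_dim n (2*e) / poly (P0 e n) 1) (P0 e n)"

lemma coeff_P0: "coeff (P0 e n) (2*e) = cc e n e"
proof -
  have "coeff (P0 e n) (2*e) = (\<Sum>i\<le>e. if 2*i = 2*e then cc e n i else 0)"
    by (simp add: P0_def coeff_sum coeff_monom eq_commute)
  also have "\<dots> = (\<Sum>i\<le>e. if i = e then cc e n i else 0)" by simp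
  also have "\<dots> = cc e n e" by simp
  finally show ?thesis .
qed

lemma cc_e_ne0: assumes "n \<ge> 4" shows "cc e n e \<noteq> 0"
proof -
  have "pochhammer (real n / 2 + real e - 1) e > 0" using assms by (intro pochhammer_pos) simp
  moreover have "pochhammer (1/2::real) e > 0" by (intro pochhammer_pos) simp
  ultimately show ?thesis by (simp add: cc_def)
qed

lemma degree_P0: assumes "n \<ge> 4" shows "degree (P0 e n) = 2*e"
proof (rule antisym)
  show "degree (P0 e n) \<le> 2*e" unfolding P0_def
    by (rule degree_sum_le) (auto simp: degree_monom_eq intro: order.trans[OF degree_monom_le])
  show "2*e \<le> degree (P0 e n)" using coeff_P0 cc_e_ne0[OF assms] by (metis le_degree)
qed

lemma Geg_eq:
  assumes n: "n \<ge> 4" and h: "harm_dim n (2*e) \<noteq> 0" and p1: "poly (P0 e n) 1 \<noteq> 0"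
  shows "Geg n (2*e) = Pn e n"
  unfolding Geg_spec_def
proof (rule the_equality)
  show sp: "geg_spec n (2*e) (Pn e n)"
    unfolding geg_spec_def
  proof (intro conjI allI impI)
    show "degree (Pn e n) = 2*e" using h p1 degree_P0[OF n] by (simp add: Pn_def)
    show "poly (Pn e n) 1 = harm_dim n (2*e)" using p1 by (simp add: Pn_def)
    fix q :: "real poly" assume q: "degree q < 2*e"
    have "(LINT x:{-1..1}|lborel. geg_weight n x * poly (Pn e n) x * poly q x)
        = integral {-1..1} (\<lambda>x. geg_weight n x * poly (Pn e n) x * poly q x)" by (rule lint_eq[OF n])
    also have "\<dots> = integral {-1..1} (\<lambda>x. (harm_dim n (2*e) / poly (P0 e n) 1) * (geg_weight n x * poly (P0 e n) x * poly q x))"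
      by (simp add: Pn_def algebra_simps)
    also have "\<dots> = 0" using orth_poly[OF n q] by simp
    finally show "(LINT x:{-1..1}|lborel. geg_weight n x * poly (Pn e n) x * poly q x) = 0" .
  qed
  fix p assume "geg_spec n (2*e) p"
  with sp show "p = Pn e n" using uniq[OF n h] by blast
qed



definition gam :: "nat \<Rightarrow> nat \<Rightarrow> real" where
  "gam e i = (-1)^i * real (e choose i) / (2^i * pochhammer (1/2) i)"

definition GG :: "nat \<Rightarrow> real \<Rightarrow> real" where
  "GG e t = (\<Sum>i\<le>e. gam e i * t^(2*i))"

lemma poch_half: "2^i * pochhammer (1/2::real) i = fact (2*i) / (2^i * fact i)"
proof (induction i)
  case 0 then show ?case by simp
next
  case (Suc i)
  have "2^Suc i * pochhammer (1/2::real) (Suc i) = (2 * real i + 1) * (2^i * pochhammer (1/2) i)"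
    by (simp add: pochhammer_Suc algebra_simps)
  also have "\<dots> = (2 * real i + 1) * (fact (2*i) / (2^i * fact i))" using Suc by simp
  also have "\<dots> = fact (2 * Suc i) / (2^Suc i * fact (Suc i))"
    by (simp add: fact_Suc field_simps del: of_nat_Suc) (simp add: algebra_simps)
  finally show ?case .
qed

lemma GG_gauss: assumes e: "e \<ge> 1"
  shows "has_bochner_integral lborel (\<lambda>t. std_normal_density t * GG e t) 0"
proof -
  have "has_bochner_integral lborel (\<lambda>t. \<Sum>i\<le>e. gam e i * (std_normal_density t * t^(2*i)))
          (\<Sum>i\<le>e. gam e i * (fact (2*i) / (2^i * fact i)))"
    by (intro has_bochner_integral_sum has_bochner_integral_mult_right std_normal_moment_even)
  moreover have "(\<Sum>i\<le>e. gam e i * (fact (2*i) / (2^i * fact i))) = (\<Sum>i\<le>e. (-1)^i * real (e choose i))"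
  proof (intro sum.cong refl)
    fix i
    have "pochhammer (1/2::real) i > 0" by (intro pochhammer_pos) auto
    thus "gam e i * (fact (2*i) / (2^i * fact i)) = (-1)^i * real (e choose i)"
      unfolding gam_def poch_half[symmetric] by simp
  qed
  moreover have "(\<Sum>i\<le>e. (-1)^i * real (e choose i)) = 0" using e by (intro choose_alternating_sum) simp
  ultimately show ?thesis by (simp add: GG_def sum_distrib_left algebra_simps)
qed

lemma GG_neg: assumes e: "e \<ge> 1" shows "\<exists>t. (-1)^e * GG e t < 0"
proof (rule ccontr)
  assume "\<not> ?thesis"
  hence nn: "0 \<le> (-1)^e * GG e t" for t by (simp add: not_less)
  define f where "f t = std_normal_density t * ((-1)^e * GG e t)" for t
  have hb: "has_bochner_integral lborel f 0"
    unfolding f_def using has_bochner_integral_mult_right[OF GG_gauss[OF e], of "(-1)^e"]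
    by (simp add: algebra_simps)
  have "integral\<^sup>L lborel f = 0" using hb by (rule has_bochner_integral_integral_eq)
  moreover have "integrable lborel f" using hb by (rule integrable.intros)
  moreover have "AE t in lborel. 0 \<le> f t" unfolding f_def using nn by simp
  ultimately have "AE t in lborel. f t = 0" using integral_nonneg_eq_0_iff_AE by blast
  hence A1: "AE t in lborel. GG e t = 0" unfolding f_def by (simp add: std_normal_density_def)
  define Gp where "Gp = (\<Sum>i\<le>e. monom (gam e i) (2*i))"
  have pG: "poly Gp t = GG e t" for t by (simp add: Gp_def GG_def poly_sum poly_monom)
  have cm: "coeff (monom (gam e i) (2*i)) 0 = (if i = 0 then gam e i else 0)" for i
    by (cases i) (auto simp: coeff_monom)
  have "coeff Gp 0 = (\<Sum>i\<le>e. if i = 0 then gam e i else 0)"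
    unfolding Gp_def coeff_sum cm ..
  also have "\<dots> = 1" by (simp add: gam_def)
  finally have "Gp \<noteq> 0" by auto
  hence "finite {t. poly Gp t = 0}" by (rule poly_roots_finite)
  hence "{t. poly Gp t = 0} \<in> null_sets lborel" by (rule finite_imp_null_set_lborel)
  hence "AE t in lborel. t \<notin> {t. poly Gp t = 0}" by (rule AE_not_in)
  with A1 have "AE t in (lborel::real measure). False" by eventually_elim (simp add: pG)
  hence "ae_filter (lborel::real measure) = bot" using trivial_limit_def by blast
  thus False by (simp add: ae_filter_eq_bot_iff)
qed



lemma poch_lim:
  fixes a c :: real
  shows "(\<lambda>n. pochhammer (real n * a + c) m / real n ^ m) \<longlonglongrightarrow> a ^ m"
proof -
  have eq: "pochhammer (real n * a + c) m / real n ^ m = (\<Prod>l<m. a + (c + real l) / real n)"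
    if n: "n > 0" for n
  proof -
    have "(\<Prod>l<m. a + (c + real l) / real n) = (\<Prod>l<m. (real n * a + c + real l) / real n)"
      using n by (intro prod.cong refl) (simp add: field_simps)
    also have "\<dots> = (\<Prod>l<m. real n * a + c + real l) / (\<Prod>l<m. real n)"
      by (rule prod_dividef)
    also have "\<dots> = pochhammer (real n * a + c) m / real n ^ m"
      by (simp add: pochhammer_prod atLeast0LessThan)
    finally show ?thesis ..
  qed
  have "(\<lambda>n. \<Prod>l<m. a + (c + real l) / real n) \<longlonglongrightarrow> (\<Prod>l<m. a + 0)"
    by (intro tendsto_prod tendsto_add tendsto_const lim_const_over_n)
  hence "(\<lambda>n. \<Prod>l<m. a + (c + real l) / real n) \<longlonglongrightarrow> a ^ m" by simp
  moreover have "\<forall>\<^sub>F n in sequentially. (\<Prod>l<m. a + (c + real l) / real n) = pochhammer (real n * a + c) m / real n ^ m"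
    using eventually_gt_at_top[of 0] by eventually_elim (simp add: eq)
  ultimately show ?thesis by (rule Lim_transform_eventually)
qed

lemma cc_lim: "(\<lambda>n. cc e n i / real n ^ i) \<longlonglongrightarrow> gam e i"
proof -
  have "(\<lambda>n. ((-1)^i * real (e choose i) / pochhammer (1/2) i) * (pochhammer (real n * (1/2) + (real e - 1)) i / real n ^ i))
         \<longlonglongrightarrow> ((-1)^i * real (e choose i) / pochhammer (1/2) i) * (1/2) ^ i"
    by (intro tendsto_mult tendsto_const poch_lim)
  moreover have "((-1)^i * real (e choose i) / pochhammer (1/2) i) * (1/2) ^ i = gam e i"
    by (simp add: gam_def power_one_over)
  moreover have "((-1)^i * real (e choose i) / pochhammer (1/2) i) * (pochhammer (real n * (1/2) + (real e - 1)) i / real n ^ i)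
      = cc e n i / real n ^ i" for n
    by (simp add: cc_def algebra_simps)
  ultimately show ?thesis by simp
qed

lemma inv_pow_lim: "(\<lambda>n. 1 / real n ^ k) \<longlonglongrightarrow> (0::real) ^ k"
proof -
  have "(\<lambda>n. (1 / real n) ^ k) \<longlonglongrightarrow> (0::real) ^ k"
    by (intro tendsto_power lim_const_over_n)
  thus ?thesis by (simp add: power_one_over)
qed

lemma P01_lim: "(\<lambda>n. poly (P0 e n) 1 / real n ^ e) \<longlonglongrightarrow> gam e e"
proof -
  have eq: "poly (P0 e n) 1 / real n ^ e = (\<Sum>i\<le>e. (cc e n i / real n ^ i) * (1 / real n ^ (e - i)))"
    if n: "n > 0" for n
  proof -
    have "poly (P0 e n) 1 / real n ^ e = (\<Sum>i\<le>e. cc e n i / real n ^ e)"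
      by (simp add: poly_P0 sum_divide_distrib)
    also have "\<dots> = (\<Sum>i\<le>e. (cc e n i / real n ^ i) * (1 / real n ^ (e - i)))"
    proof (intro sum.cong refl)
      fix i assume "i \<in> {..e}"
      hence "real n ^ e = real n ^ i * real n ^ (e - i)" by (simp flip: power_add)
      thus "cc e n i / real n ^ e = (cc e n i / real n ^ i) * (1 / real n ^ (e - i))" by simp
    qed
    finally show ?thesis .
  qed
  have "(\<lambda>n. \<Sum>i\<le>e. (cc e n i / real n ^ i) * (1 / real n ^ (e - i))) \<longlonglongrightarrow> (\<Sum>i\<le>e. gam e i * (0::real) ^ (e - i))"
    by (intro tendsto_sum tendsto_mult cc_lim inv_pow_lim)
  moreover have "(\<Sum>i\<le>e. gam e i * (0::real) ^ (e - i)) = (\<Sum>i\<le>e. if i = e then gam e i else 0)"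
    by (intro sum.cong refl) auto
  ultimately have "(\<lambda>n. \<Sum>i\<le>e. (cc e n i / real n ^ i) * (1 / real n ^ (e - i))) \<longlonglongrightarrow> gam e e"
    by simp
  moreover have "\<forall>\<^sub>F n in sequentially. (\<Sum>i\<le>e. (cc e n i / real n ^ i) * (1 / real n ^ (e - i))) = poly (P0 e n) 1 / real n ^ e"
    using eventually_gt_at_top[of 0] by eventually_elim (simp add: eq)
  ultimately show ?thesis by (rule Lim_transform_eventually)
qed

lemma harm_eq:
  assumes n: "n \<ge> 1" and e: "e \<ge> 1"
  shows "harm_dim n (2*e) = pochhammer (real n) (2*e) / fact (2*e) - pochhammer (real n) (2*e-2) / fact (2*e-2)"
proof -
  have c1: "n + 2*e - 1 choose (n - 1) = n + 2*e - 1 choose (2*e)"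
    using n by (subst binomial_symmetric) auto
  have c2: "n + 2*e - 3 choose (n - 1) = n + 2*e - 3 choose (2*e - 2)"
    using n e by (subst binomial_symmetric) auto
  have r1: "real (n + 2*e - 1 choose (2*e)) = pochhammer (real n) (2*e) / fact (2*e)"
    unfolding binomial_gbinomial gbinomial_pochhammer' using n by (simp add: of_nat_diff)
  have r2: "real (n + 2*e - 3 choose (2*e - 2)) = pochhammer (real n) (2*e-2) / fact (2*e-2)"
    unfolding binomial_gbinomial gbinomial_pochhammer' using n e by (simp add: of_nat_diff)
  show ?thesis unfolding harm_dim_def c1 c2 r1 r2 ..
qed

lemma h_lim: assumes e: "e \<ge> 1"
  shows "(\<lambda>n. harm_dim n (2*e) / real n ^ (2*e)) \<longlonglongrightarrow> 1 / fact (2*e)"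
proof -
  have eq: "harm_dim n (2*e) / real n ^ (2*e) =
      (pochhammer (real n * 1 + 0) (2*e) / real n ^ (2*e)) / fact (2*e) -
      (pochhammer (real n * 1 + 0) (2*e-2) / real n ^ (2*e-2)) * (1 / real n ^ 2) / fact (2*e-2)"
    if n: "n \<ge> 1" for n
  proof -
    have ee: "2*e = (2*e-2) + 2" using e by simp
    have "real n ^ (2*e) = real n ^ (2*e-2) * real n ^ 2" by (subst ee) (simp only: power_add)
    moreover have "real n \<noteq> 0" using n by simp
    ultimately show ?thesis unfolding harm_eq[OF n e] by (simp add: field_simps)
  qed
  have "(\<lambda>n. (pochhammer (real n * 1 + 0) (2*e) / real n ^ (2*e)) / fact (2*e) -
      (pochhammer (real n * 1 + 0) (2*e-2) / real n ^ (2*e-2)) * (1 / real n ^ 2) / fact (2*e-2))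
      \<longlonglongrightarrow> (1 ^ (2*e)) / fact (2*e) - (1 ^ (2*e-2)) * 0 ^ 2 / fact (2*e-2)"
    by (intro tendsto_diff tendsto_divide tendsto_mult poch_lim inv_pow_lim tendsto_const) auto
  hence "(\<lambda>n. (pochhammer (real n * 1 + 0) (2*e) / real n ^ (2*e)) / fact (2*e) -
      (pochhammer (real n * 1 + 0) (2*e-2) / real n ^ (2*e-2)) * (1 / real n ^ 2) / fact (2*e-2))
      \<longlonglongrightarrow> 1 / fact (2*e)" by simp
  moreover have "\<forall>\<^sub>F n in sequentially. (pochhammer (real n * 1 + 0) (2*e) / real n ^ (2*e)) / fact (2*e) -
      (pochhammer (real n * 1 + 0) (2*e-2) / real n ^ (2*e-2)) * (1 / real n ^ 2) / fact (2*e-2) = harm_dim n (2*e) / real n ^ (2*e)"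
    using eventually_ge_at_top[of 1] by eventually_elim (simp only: eq)
  ultimately show ?thesis by (rule Lim_transform_eventually)
qed



lemma tail_nonneg:
  fixes a :: "nat \<Rightarrow> real"
  assumes e: "e \<ge> 1" and ae: "a e \<ge> g" and g: "g > 0" and B: "\<forall>i<e. \<bar>a i\<bar> \<le> B"
    and u1: "t^2 \<ge> 1" and u2: "t^2 \<ge> real e * B / g"
  shows "0 \<le> (\<Sum>i\<le>e. a i * t^(2*i))"
proof -
  define u where "u = t^2"
  have u: "u \<ge> 1" using u1 by (simp add: u_def)
  have tp: "t^(2*i) = u^i" for i by (simp add: u_def power_mult)
  have "\<bar>a 0\<bar> \<le> B" using B e by auto
  hence B0: "B \<ge> 0" using abs_ge_zero[of "a 0"] by linarith
  have low: "a i * u^i \<ge> - (B * u^(e-1))" if i: "i < e" for i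
  proof -
    have "u^i \<le> u^(e-1)" using i u by (intro power_increasing) auto
    moreover have "\<bar>a i\<bar> \<le> B" using B i by auto
    moreover have "u^i \<ge> 0" using u by simp
    ultimately have "\<bar>a i\<bar> * u^i \<le> B * u^(e-1)" using B0 by (intro mult_mono) auto
    moreover have "(- \<bar>a i\<bar>) * u^i \<le> a i * u^i" using \<open>u^i \<ge> 0\<close>
      by (intro mult_right_mono) auto
    ultimately show ?thesis by linarith
  qed
  have "(\<Sum>i<e. a i * u^i) \<ge> (\<Sum>i<e. - (B * u^(e-1)))" using low by (intro sum_mono) auto
  hence S1: "(\<Sum>i<e. a i * u^i) \<ge> - (real e * B * u^(e-1))" by simp
  have ue: "u^e = u * u^(e-1)" using e by (cases e) auto
  have "a e * u^e \<ge> g * u^e" using ae u by (intro mult_right_mono) auto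
  moreover have "g * u \<ge> real e * B" using u2 g by (simp add: u_def field_simps)
  hence "g * u * u^(e-1) \<ge> real e * B * u^(e-1)" using u by (intro mult_right_mono) auto
  ultimately have S2: "a e * u^e \<ge> real e * B * u^(e-1)" unfolding ue by (simp add: mult.assoc)
  have "(\<Sum>i\<le>e. a i * t^(2*i)) = (\<Sum>i<e. a i * u^i) + a e * u^e"
    by (simp add: tp lessThan_Suc_atMost[symmetric])
  thus ?thesis using S1 S2 by linarith
qed

lemma sqrt_pow: "x \<ge> 0 \<Longrightarrow> (sqrt x * y) ^ (2*i) = x^i * y^(2*i)"
  by (simp add: power_mult_distrib power_mult)

lemma gam_pos: "(-1)^e * gam e e > 0"
proof -
  have "pochhammer (1/2::real) e > 0" by (intro pochhammer_pos) simp
  moreover have "(-1::real)^e * (-1)^e = 1" by (simp flip: power_mult_distrib)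
  ultimately show ?thesis by (simp add: gam_def mult.assoc[symmetric])
qed

lemma ev_Geg:
  assumes e: "e \<ge> 1"
  shows "\<forall>\<^sub>F n in sequentially. n \<ge> 4 \<and> harm_dim n (2*e) > 0 \<and>
           (-1)^e * poly (P0 e n) 1 > 0 \<and> Geg n (2*e) = Pn e n"
proof -
  have h1: "\<forall>\<^sub>F n in sequentially. 0 < harm_dim n (2*e) / real n ^ (2*e)"
    by (rule order_tendstoD(1)[OF h_lim[OF e]]) simp
  have "(\<lambda>n. (-1)^e * (poly (P0 e n) 1 / real n ^ e)) \<longlonglongrightarrow> (-1)^e * gam e e"
    by (intro tendsto_mult tendsto_const P01_lim)
  hence p1: "\<forall>\<^sub>F n in sequentially. 0 < (-1)^e * (poly (P0 e n) 1 / real n ^ e)"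
    by (rule order_tendstoD(1)) (rule gam_pos)
  show ?thesis using h1 p1 eventually_ge_at_top[of 4]
  proof eventually_elim
    case (elim n)
    have np: "real n ^ (2*e) > 0" "real n ^ e > 0" using elim(3) by auto
    have h: "harm_dim n (2*e) > 0" using elim(1) np by (simp add: zero_less_divide_iff)
    have "(-1)^e * poly (P0 e n) 1 / real n ^ e > 0" using elim(2) by simp
    hence p: "(-1)^e * poly (P0 e n) 1 > 0" using np by (simp add: zero_less_divide_iff)
    have "poly (P0 e n) 1 \<noteq> 0" using p by auto
    thus ?case using elim(3) h p Geg_eq[of n e] by auto
  qed
qed



lemma div_cancel_aux: "(s::real) \<noteq> 0 \<Longrightarrow> h / (s * P) * (s * X) = h / P * X"
  by (cases "P = 0") (simp_all add: field_simps)

lemma div_aux2: "(N::real) \<noteq> 0 \<Longrightarrow> (h / (N*N)) / (s * (P / N)) = h/(s*P) / N"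
  by (cases "s * P = 0") (auto simp: field_simps)

lemma main_c:
  assumes e: "e \<ge> 1"
  shows "\<exists>A>0. (\<lambda>n. geg_c n (2*e) / real n ^ e) \<longlonglongrightarrow> A"
proof -
  define s :: real where "s = (-1)^e"
  have ss: "s * s = 1" unfolding s_def by (simp flip: power_mult_distrib)
  define a where "a n i = s * (cc e n i / real n ^ i)" for n i
  define b where "b i = s * gam e i" for i
  define F where "F n t = (\<Sum>i\<le>e. a n i * t^(2*i))" for n t
  define SG where "SG t = (\<Sum>i\<le>e. b i * t^(2*i))" for t
  define \<gamma> where "\<gamma> = b e"
  have gam: "\<gamma> > 0" unfolding \<gamma>_def b_def s_def by (rule gam_pos)
  have alim: "(\<lambda>n. a n i) \<longlonglongrightarrow> b i" for i
    unfolding a_def b_def by (intro tendsto_mult tendsto_const cc_lim)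
  have SGs: "SG t = s * GG e t" for t by (simp add: SG_def GG_def b_def sum_distrib_left algebra_simps)
  obtain t0 where t0: "SG t0 < 0" using GG_neg[OF e] SGs s_def by auto
  define B0 where "B0 = 1 + (\<Sum>i\<le>e. \<bar>b i\<bar>)"
  have bB: "\<bar>b i\<bar> + 1 \<le> B0" if "i \<le> e" for i
  proof -
    have "\<bar>b i\<bar> \<le> (\<Sum>i\<le>e. \<bar>b i\<bar>)" using that by (intro member_le_sum) auto
    thus ?thesis by (simp add: B0_def)
  qed
  define T where "T = max 1 (max \<bar>t0\<bar> (sqrt (real e * B0 / (\<gamma>/2))))"
  have T1: "T \<ge> 1" and Tt0: "\<bar>t0\<bar> \<le> T" by (auto simp: T_def)
  have T2: "T^2 \<ge> real e * B0 / (\<gamma>/2)"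
  proof -
    have B0p: "B0 \<ge> 0" unfolding B0_def by (intro add_nonneg_nonneg sum_nonneg) auto
    have "sqrt (real e * B0 / (\<gamma>/2)) \<le> T" by (simp add: T_def)
    moreover have "0 \<le> real e * B0 / (\<gamma>/2)" using B0p gam by simp
    ultimately have "(sqrt (real e * B0 / (\<gamma>/2)))^2 \<le> T^2" by (intro power_mono) auto
    thus ?thesis using B0p gam by simp
  qed
  have big: "t^2 \<ge> 1 \<and> t^2 \<ge> real e * B0 / (\<gamma>/2)" if "\<bar>t\<bar> \<ge> T" for t
  proof -
    have "T^2 \<le> \<bar>t\<bar>^2" using that T1 by (intro power_mono) auto
    moreover have "1 \<le> T^2" using T1 by simp
    ultimately show ?thesis using T2 by simp
  qed
  have SGbig: "SG t \<ge> 0" if "\<bar>t\<bar> \<ge> T" for t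
    unfolding SG_def
  proof (rule tail_nonneg[OF e, where a=b and g="\<gamma>/2" and B=B0])
    show "\<gamma>/2 \<le> b e" using gam by (simp add: \<gamma>_def)
    show "0 < \<gamma>/2" using gam by simp
    show "\<forall>i<e. \<bar>b i\<bar> \<le> B0"
    proof (intro allI impI)
      fix i assume "i < e"
      hence "\<bar>b i\<bar> + 1 \<le> B0" using bB by simp
      thus "\<bar>b i\<bar> \<le> B0" by linarith
    qed
  qed (use big[OF that] in auto)
  obtain ts where ts: "ts \<in> {-T..T}" and tsmin: "\<forall>y\<in>{-T..T}. SG ts \<le> SG y"
  proof -
    have "continuous_on {-T..T} SG" unfolding SG_def by (intro continuous_intros)
    hence "\<exists>x\<in>{-T..T}. \<forall>y\<in>{-T..T}. SG x \<le> SG y"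
      using T1 by (intro continuous_attains_inf) auto
    thus ?thesis using that by blast
  qed
  define \<mu> where "\<mu> = SG ts"
  have "t0 \<in> {-T..T}" using Tt0 by (auto simp: abs_le_iff)
  hence "SG ts \<le> SG t0" using tsmin by blast
  hence mu_neg: "\<mu> < 0" using t0 unfolding \<mu>_def by linarith
  have SGge: "SG t \<ge> \<mu>" for t
  proof (cases "\<bar>t\<bar> \<le> T")
    case True hence "t \<in> {-T..T}" by (auto simp: abs_le_iff)
    thus ?thesis using tsmin unfolding \<mu>_def by blast
  next
    case False thus ?thesis using SGbig[of t] mu_neg by auto
  qed
  define \<delta> where "\<delta> n = (\<Sum>i\<le>e. \<bar>a n i - b i\<bar> * T^(2*i))" for n
  have dlim: "\<delta> \<longlonglongrightarrow> 0"
  proof -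
    have "(\<lambda>n. \<Sum>i\<le>e. \<bar>a n i - b i\<bar> * T^(2*i)) \<longlonglongrightarrow> (\<Sum>i\<le>e. \<bar>b i - b i\<bar> * T^(2*i))"
      by (intro tendsto_sum tendsto_mult tendsto_rabs tendsto_diff alim tendsto_const)
    moreover have "\<delta> = (\<lambda>n. \<Sum>i\<le>e. \<bar>a n i - b i\<bar> * T^(2*i))" by (rule ext) (simp add: \<delta>_def)
    ultimately show ?thesis by simp
  qed
  have dpos: "\<delta> n \<ge> 0" for n unfolding \<delta>_def by (intro sum_nonneg) auto
  have close: "\<bar>F n t - SG t\<bar> \<le> \<delta> n" if "\<bar>t\<bar> \<le> T" for n t
  proof -
    have "\<bar>F n t - SG t\<bar> = \<bar>\<Sum>i\<le>e. (a n i - b i) * t^(2*i)\<bar>"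
      by (simp add: F_def SG_def sum_subtractf algebra_simps)
    also have "\<dots> \<le> (\<Sum>i\<le>e. \<bar>(a n i - b i) * t^(2*i)\<bar>)" by (rule sum_abs)
    also have "\<dots> \<le> \<delta> n" unfolding \<delta>_def
    proof (intro sum_mono)
      fix i
      have "\<bar>t\<bar>^(2*i) \<le> T^(2*i)" using that by (intro power_mono) auto
      thus "\<bar>(a n i - b i) * t^(2*i)\<bar> \<le> \<bar>a n i - b i\<bar> * T^(2*i)"
        by (simp add: abs_mult power_abs mult_left_mono)
    qed
    finally show ?thesis .
  qed
  have ev1: "\<forall>\<^sub>F n in sequentially. \<forall>i\<in>{..e}. \<bar>a n i - b i\<bar> < 1"
    using alim by (intro eventually_ball_finite) (auto simp: tendsto_iff dist_real_def)
  have ev2: "\<forall>\<^sub>F n in sequentially. a n e > \<gamma>/2"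
    using alim[of e] gam by (intro order_tendstoD(1)) (auto simp: \<gamma>_def)
  have Fbig: "\<forall>\<^sub>F n in sequentially. \<forall>t. \<bar>t\<bar> \<ge> T \<longrightarrow> F n t \<ge> 0"
    using ev1 ev2
  proof eventually_elim
    case (elim n)
    show ?case
    proof (intro allI impI)
      fix t assume t: "\<bar>t\<bar> \<ge> T"
      show "F n t \<ge> 0" unfolding F_def
      proof (rule tail_nonneg[OF e, where a="a n" and g="\<gamma>/2" and B=B0])
        show "\<gamma>/2 \<le> a n e" using elim(2) by simp
        show "0 < \<gamma>/2" using gam by simp
        show "\<forall>i<e. \<bar>a n i\<bar> \<le> B0"
        proof (intro allI impI)
          fix i assume "i < e"
          hence "\<bar>a n i - b i\<bar> < 1" "\<bar>b i\<bar> + 1 \<le> B0" using elim(1) bB by auto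
          thus "\<bar>a n i\<bar> \<le> B0" by linarith
        qed
      qed (use big[OF t] in auto)
    qed
  qed
  have Flow: "\<forall>\<^sub>F n in sequentially. \<forall>t. F n t \<ge> \<mu> - \<delta> n"
    using Fbig
  proof eventually_elim
    case (elim n)
    show ?case
    proof
      fix t
      show "F n t \<ge> \<mu> - \<delta> n"
      proof (cases "\<bar>t\<bar> \<le> T")
        case True
        thus ?thesis using close[OF True, of n] SGge[of t] by linarith
      next
        case False
        thus ?thesis using elim[rule_format, of t] mu_neg dpos[of n] by auto
      qed
    qed
  qed
  have Fup: "F n ts \<le> \<mu> + \<delta> n" for n
  proof -
    have "\<bar>ts\<bar> \<le> T" using ts by (auto simp: abs_le_iff)
    hence "\<bar>F n ts - SG ts\<bar> \<le> \<delta> n" by (rule close)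
    thus ?thesis unfolding \<mu>_def by linarith
  qed
  define K where "K n = harm_dim n (2*e) / (s * poly (P0 e n) 1)" for n
  have polyPn: "poly (Pn e n) x = K n * F n (sqrt (real n) * x)" if n: "n > 0" for n x
  proof -
    have "F n (sqrt (real n) * x) = s * (\<Sum>i\<le>e. cc e n i * x^(2*i))"
      unfolding F_def a_def sum_distrib_left
    proof (intro sum.cong refl)
      fix i
      have "(sqrt (real n) * x)^(2*i) = real n ^ i * x^(2*i)" by (rule sqrt_pow) simp
      thus "s * (cc e n i / real n ^ i) * (sqrt (real n) * x) ^ (2 * i) = s * (cc e n i * x ^ (2 * i))"
        using n by simp
    qed
    moreover have "s \<noteq> 0" using ss by auto
    ultimately have "K n * F n (sqrt (real n) * x) = harm_dim n (2*e) / poly (P0 e n) 1 * (\<Sum>i\<le>e. cc e n i * x^(2*i))"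
      unfolding K_def by (simp add: div_cancel_aux)
    thus ?thesis unfolding Pn_def poly_smult poly_P0 by simp
  qed
  define L where "L = (1 / fact (2*e)) / \<gamma>"
  have Lpos: "L > 0" using gam by (simp add: L_def)
  have Klim: "(\<lambda>n. K n / real n ^ e) \<longlonglongrightarrow> L"
  proof -
    have gs: "s * gam e e = \<gamma>" by (simp add: \<gamma>_def b_def)
    have lim1: "(\<lambda>n. (harm_dim n (2*e) / real n ^ (2*e)) / (s * (poly (P0 e n) 1 / real n ^ e))) \<longlonglongrightarrow> (1 / fact (2*e)) / (s * gam e e)"
    proof (rule tendsto_divide)
      show "(\<lambda>n. harm_dim n (2*e) / real n ^ (2*e)) \<longlonglongrightarrow> 1 / fact (2*e)" by (rule h_lim[OF e])
      show "(\<lambda>n. s * (poly (P0 e n) 1 / real n ^ e)) \<longlonglongrightarrow> s * gam e e"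
        by (intro tendsto_mult tendsto_const P01_lim)
      show "s * gam e e \<noteq> 0" using gs gam by simp
    qed
    have lim2: "(1 / fact (2*e)) / (s * gam e e) = L" unfolding gs L_def ..
    have ev: "\<forall>\<^sub>F n in sequentially. (harm_dim n (2*e) / real n ^ (2*e)) / (s * (poly (P0 e n) 1 / real n ^ e)) = K n / real n ^ e"
      using eventually_gt_at_top[of 0]
    proof eventually_elim
      case (elim n)
      have N: "real n ^ e \<noteq> 0" using elim by simp
      have "real n ^ (2*e) = real n ^ e * real n ^ e" by (simp flip: power_add mult_2)
      thus ?case unfolding K_def using div_aux2[OF N] by simp
    qed
    show ?thesis using Lim_transform_eventually[OF lim1 ev] lim2 by simp
  qed
  have evsq: "\<forall>\<^sub>F n in sequentially. sqrt (real n) \<ge> T"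
    using eventually_ge_at_top[of "nat \<lceil>T^2\<rceil>"]
  proof eventually_elim
    case (elim n)
    have "T^2 \<le> real (nat \<lceil>T^2\<rceil>)" by (rule real_nat_ceiling_ge)
    also have "\<dots> \<le> real n" using elim by (simp only: of_nat_le_iff)
    finally have "T^2 \<le> real n" .
    thus ?case by (rule real_le_rsqrt)
  qed
  have bounds: "\<forall>\<^sub>F n in sequentially.
      - (K n / real n ^ e) * (\<mu> + \<delta> n) \<le> geg_c n (2*e) / real n ^ e \<and>
      geg_c n (2*e) / real n ^ e \<le> - (K n / real n ^ e) * (\<mu> - \<delta> n)"
    using ev_Geg[OF e] Flow evsq eventually_gt_at_top[of 0]
  proof eventually_elim
    case (elim n)
    have n: "n > 0" using elim(4) .
    have h: "harm_dim n (2*e) > 0" and p: "s * poly (P0 e n) 1 > 0" and G: "Geg n (2*e) = Pn e n"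
      using elim(1) by (auto simp: s_def)
    have Kp: "K n > 0" using h p by (simp add: K_def)
    have low: "poly (Pn e n) x \<ge> K n * (\<mu> - \<delta> n)" for x
    proof -
      have "F n (sqrt (real n) * x) \<ge> \<mu> - \<delta> n" using elim(2) by blast
      hence "K n * (\<mu> - \<delta> n) \<le> K n * F n (sqrt (real n) * x)"
        using Kp by (intro mult_left_mono) auto
      thus ?thesis unfolding polyPn[OF n] .
    qed
    define I where "I = (INF x\<in>{-1..1::real}. poly (Pn e n) x)"
    have I1: "I \<ge> K n * (\<mu> - \<delta> n)" unfolding I_def by (intro cINF_greatest low) auto
    define xs where "xs = ts / sqrt (real n)"
    have sq: "sqrt (real n) > 0" using n by simp
    have xs: "xs \<in> {-1..1}"
    proof -
      have a1: "-T \<le> ts" "ts \<le> T" using ts by auto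
      have a2: "ts \<le> sqrt (real n)" "- sqrt (real n) \<le> ts" using a1 elim(3) by linarith+
      have "xs \<le> 1" unfolding xs_def using sq a2(1) by (simp add: divide_le_eq)
      moreover have "-1 \<le> xs" unfolding xs_def using sq a2(2) by (simp add: le_divide_eq)
      ultimately show ?thesis by simp
    qed
    have "sqrt (real n) * xs = ts" using sq by (simp add: xs_def)
    hence pxs: "poly (Pn e n) xs = K n * F n ts" using polyPn[OF n, of xs] by simp
    have "I \<le> poly (Pn e n) xs" unfolding I_def
      by (rule cINF_lower[OF bdd_belowI2[where m="K n * (\<mu> - \<delta> n)"] xs]) (rule low)
    also have "\<dots> \<le> K n * (\<mu> + \<delta> n)" unfolding pxs using Fup[of n] Kp by (intro mult_left_mono) auto
    finally have I2: "I \<le> K n * (\<mu> + \<delta> n)" .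
    have c: "geg_c n (2*e) = - I" unfolding geg_c_def I_def G ..
    have np: "real n ^ e > 0" using n by simp
    have r1: "- (K n / real n ^ e) * (\<mu> + \<delta> n) = (- (K n * (\<mu> + \<delta> n))) / real n ^ e" by simp
    have r2: "- (K n / real n ^ e) * (\<mu> - \<delta> n) = (- (K n * (\<mu> - \<delta> n))) / real n ^ e" by simp
    show ?case
    proof
      have "- (K n * (\<mu> + \<delta> n)) \<le> - I" using I2 by simp
      hence "(- (K n * (\<mu> + \<delta> n))) / real n ^ e \<le> (- I) / real n ^ e"
        using np by (intro divide_right_mono) auto
      thus "- (K n / real n ^ e) * (\<mu> + \<delta> n) \<le> geg_c n (2*e) / real n ^ e"
        unfolding c r1 .
      have "- I \<le> - (K n * (\<mu> - \<delta> n))" using I1 by simp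
      hence "(- I) / real n ^ e \<le> (- (K n * (\<mu> - \<delta> n))) / real n ^ e"
        using np by (intro divide_right_mono) auto
      thus "geg_c n (2*e) / real n ^ e \<le> - (K n / real n ^ e) * (\<mu> - \<delta> n)"
        unfolding c r2 .
    qed
  qed
  have l1: "(\<lambda>n. - (K n / real n ^ e) * (\<mu> + \<delta> n)) \<longlonglongrightarrow> - L * (\<mu> + 0)"
    by (intro tendsto_mult tendsto_minus Klim tendsto_add tendsto_const dlim)
  have l2: "(\<lambda>n. - (K n / real n ^ e) * (\<mu> - \<delta> n)) \<longlonglongrightarrow> - L * (\<mu> - 0)"
    by (intro tendsto_mult tendsto_minus Klim tendsto_diff tendsto_const dlim)
  have b1: "\<forall>\<^sub>F n in sequentially. - (K n / real n ^ e) * (\<mu> + \<delta> n) \<le> geg_c n (2*e) / real n ^ e"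
    using bounds by (rule eventually_mono) (rule conjunct1)
  have b2: "\<forall>\<^sub>F n in sequentially. geg_c n (2*e) / real n ^ e \<le> - (K n / real n ^ e) * (\<mu> - \<delta> n)"
    using bounds by (rule eventually_mono) (rule conjunct2)
  have "(\<lambda>n. geg_c n (2*e) / real n ^ e) \<longlonglongrightarrow> - L * \<mu>"
    using tendsto_sandwich[OF b1 b2] l1 l2 by simp
  moreover have "- L * \<mu> > 0" using Lpos mu_neg by (simp add: mult_pos_neg)
  ultimately show ?thesis by blast
qed



lemma div_aux3: "(N::real) \<noteq> 0 \<Longrightarrow> (1 + h / c) / N = 1 / N + (h / (N*N)) / (c / N)"
  by (cases "c = 0") (simp_all add: field_simps)

theorem theorem5p1:
  fixes e :: nat
  assumes "e \<ge> 2"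
  shows "\<exists>A B :: real. A > 0 \<and> B > 0 \<and>
           ((\<lambda>n. geg_c n (2 * e) / real n ^ e) \<longlonglongrightarrow> A) \<and>
           ((\<lambda>n. geg_b n (2 * e) / real n ^ e) \<longlonglongrightarrow> B)"
proof -
  have e: "e \<ge> 1" using assms by simp
  obtain A where A: "A > 0" and cl: "(\<lambda>n. geg_c n (2*e) / real n ^ e) \<longlonglongrightarrow> A"
    using main_c[OF e] by blast
  define B where "B = (1 / fact (2*e)) / A"
  have B: "B > 0" using A by (simp add: B_def)
  have lim: "(\<lambda>n. 1 / real n ^ e + (harm_dim n (2*e) / real n ^ (2*e)) / (geg_c n (2*e) / real n ^ e))
      \<longlonglongrightarrow> 0 ^ e + (1 / fact (2*e)) / A"
    using A by (intro tendsto_add inv_pow_lim tendsto_divide h_lim[OF e] cl) auto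
  have lim': "(\<lambda>n. 1 / real n ^ e + (harm_dim n (2*e) / real n ^ (2*e)) / (geg_c n (2*e) / real n ^ e))
      \<longlonglongrightarrow> B"
  proof -
    have z: "(0::real)^e = 0" using e by simp
    show ?thesis using lim unfolding z B_def by simp
  qed
  have ev: "\<forall>\<^sub>F n in sequentially. 1 / real n ^ e + (harm_dim n (2*e) / real n ^ (2*e)) / (geg_c n (2*e) / real n ^ e)
      = geg_b n (2*e) / real n ^ e"
    using ev_Geg[OF e] eventually_gt_at_top[of 0]
  proof eventually_elim
    case (elim n)
    have G: "Geg n (2*e) = Pn e n" and p: "poly (P0 e n) 1 \<noteq> 0" using elim(1) by auto
    have v: "poly (Geg n (2*e)) 1 = harm_dim n (2*e)" using p unfolding G Pn_def by simp
    have N: "real n ^ e \<noteq> 0" using elim(2) by simp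
    have "real n ^ (2*e) = real n ^ e * real n ^ e" by (simp flip: power_add mult_2)
    thus ?case unfolding geg_b_def v using div_aux3[OF N] by simp
  qed
  have "(\<lambda>n. geg_b n (2*e) / real n ^ e) \<longlonglongrightarrow> B"
    using Lim_transform_eventually[OF lim' ev] .
  with A B cl show ?thesis by blast
qed

end
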